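(* Let $\hat W$ be a first degree iMPO in regular form of bond dimension $\chi$, let $(\hat W_n)_{n\ge1}$ be generated from $\hat W_0:=\hat W$ by QR iteration with a positive rank-revealing QR ($(\hat Q_n,R_n)$ the block-respecting QR decomposition of $\hat W_{n-1}$, $\hat W_n:=R_n\hat Q_n$), and suppose the leading eigenvector $X$ of $T_V$ (left eigenvector $XT_V=X$ with $X_{00}=1$, $\hat V$ the upper-left $(1+\chi)\times(1+\chi)$ block of $\hat W$) is invertible. Then every $\hat W_n$ has the same bond dimension $\chi$ as $\hat W$.
   Context: $\mathcal A$ is the algebra of operators on $\mathbb C^q$ with inner product $\langle\hat A,\hat B\rangle=\mathrm{Tr}[\hat A^\dagger\hat B]/\mathrm{Tr}[\hat 1]$ and orthonormal basis $\{\hat O_\alpha\}$ with $\hat O_0=\hat 1$; $(W_\alpha)_{ab}=\langle\hat O_\alpha,\hat W_{ab}\rangle$ and the transfer matrix acts by $XT_W=\sum_\alpha W_\alpha^\dagger XW_\alpha$. An iMPO in regular form of bond dimension $\chi$ is a $(\chi+2)\times(\chi+2)$ matrix with entries in $\mathcal A$ of block form $\begin{pmatrix}\hat 1&\hat{\mathbf c}&\hat d\\0&\hat{\mathsf A}&\hat{\mathbf b}\\0&0&\hat 1\end{pmatrix}$ with upper-left block $\hat V=\begin{pmatrix}\hat 1&\hat{\mathbf c}\\0&\hat{\mathsf A}\end{pmatrix}$; first degree means all eigenvalues of $T_A$ have modulus $<1$. Block-respecting QR: $\hat V=\hat V'R'$ with $\hat V'=\begin{pmatrix}\hat 1&\hat{\mathbf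 c}'\\0&\hat{\mathsf A}'\end{pmatrix}$ having orthonormal columns and $R'=\begin{pmatrix}1&\mathbf t\\0&\mathsf R\end{pmatrix}$ upper triangular, and $\hat Q=\begin{pmatrix}\hat 1&\hat{\mathbf c}'&\hat d\\0&\hat{\mathsf A}'&\hat{\mathbf b}\\0&0&\hat 1\end{pmatrix}$, $R=\begin{pmatrix}1&\mathbf t&0\\0&\mathsf R&0\\0&0&1\end{pmatrix}$. Positive rank-revealing: viewing $\hat V$ as a complex $q^2(1+\chi)\times(1+\chi)$ matrix of column rank $1+\chi'$, $\hat V'$ has $1+\chi'$ columns and $R'$ has $1+\chi'$ rows, and if $\chi'=\chi$ then $R'$ has positive diagonal. *)

theory Defs
  imports Complex_Main "Jordan_Normal_Form.DL_Rank"
begin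

text \<open>Operators on C^q are complex q x q matrices (type complex mat, carrier q q).
An operator-valued matrix (e.g. an iMPO) is a complex mat mat whose entries are operators.\<close>

definition op_inner :: "nat \<Rightarrow> complex mat \<Rightarrow> complex mat \<Rightarrow> complex" where
  "op_inner q A B = (\<Sum>i<q. \<Sum>j<q. cnj (A $$ (i,j)) * B $$ (i,j)) / of_nat q"

definition opmat_ok :: "nat \<Rightarrow> nat \<Rightarrow> nat \<Rightarrow> complex mat mat \<Rightarrow> bool" where
  "opmat_ok q m n W \<longleftrightarrow> W \<in> carrier_mat m n \<and> (\<forall>i<m. \<forall>j<n. W $$ (i,j) \<in> carrier_mat q q)"

definition op_onb :: "nat \<Rightarrow> (nat \<Rightarrow> complex mat) \<Rightarrow> bool" where
  "op_onb q Ob \<longleftrightarrow> (\<forall>\<alpha><q*q. Ob \<alpha> \<in> carrier_mat q q) \<and>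
     (\<forall>\<alpha><q*q. \<forall>\<beta><q*q. op_inner q (Ob \<alpha>) (Ob \<beta>) = (if \<alpha> = \<beta> then 1 else 0)) \<and>
     Ob 0 = 1\<^sub>m q"

definition coef_mat :: "nat \<Rightarrow> (nat \<Rightarrow> complex mat) \<Rightarrow> nat \<Rightarrow> complex mat mat \<Rightarrow> complex mat" where
  "coef_mat q Ob \<alpha> W = mat (dim_row W) (dim_col W) (\<lambda>(a,b). op_inner q (Ob \<alpha>) (W $$ (a,b)))"

text \<open>Transfer matrix: X T_W = sum_alpha W_alpha^dagger X W_alpha (written entrywise).\<close>
definition transfer :: "nat \<Rightarrow> (nat \<Rightarrow> complex mat) \<Rightarrow> complex mat mat \<Rightarrow> complex mat \<Rightarrow> complex mat" where
  "transfer q Ob W X = mat (dim_col W) (dim_col W) (\<lambda>(c,d).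
      \<Sum>\<alpha><q*q. \<Sum>a<dim_row W. \<Sum>b<dim_row W.
        cnj (coef_mat q Ob \<alpha> W $$ (a,c)) * X $$ (a,b) * coef_mat q Ob \<alpha> W $$ (b,d))"

definition regular_form :: "nat \<Rightarrow> nat \<Rightarrow> complex mat mat \<Rightarrow> bool" where
  "regular_form q \<chi> W \<longleftrightarrow> opmat_ok q (\<chi>+2) (\<chi>+2) W \<and>
     W $$ (0,0) = 1\<^sub>m q \<and> W $$ (\<chi>+1,\<chi>+1) = 1\<^sub>m q \<and>
     (\<forall>i. 1 \<le> i \<and> i \<le> \<chi>+1 \<longrightarrow> W $$ (i,0) = 0\<^sub>m q q) \<and>
     (\<forall>j\<le>\<chi>. W $$ (\<chi>+1,j) = 0\<^sub>m q q)"

definition bond_dim :: "complex mat mat \<Rightarrow> nat" where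
  "bond_dim W = dim_row W - 2"

definition V_block :: "nat \<Rightarrow> complex mat mat \<Rightarrow> complex mat mat" where
  "V_block \<chi> W = mat (\<chi>+1) (\<chi>+1) (\<lambda>(i,j). W $$ (i,j))"

definition A_block :: "nat \<Rightarrow> complex mat mat \<Rightarrow> complex mat mat" where
  "A_block \<chi> W = mat \<chi> \<chi> (\<lambda>(i,j). W $$ (i+1,j+1))"

definition first_degree :: "nat \<Rightarrow> (nat \<Rightarrow> complex mat) \<Rightarrow> nat \<Rightarrow> complex mat mat \<Rightarrow> bool" where
  "first_degree q Ob \<chi> W \<longleftrightarrow> (\<forall>ev Y. Y \<in> carrier_mat \<chi> \<chi> \<and> Y \<noteq> 0\<^sub>m \<chi> \<chi> \<and>
      transfer q Ob (A_block \<chi> W) Y = ev \<cdot>\<^sub>m Y \<longrightarrow> cmod ev < 1)"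

definition opmat_times_mat :: "nat \<Rightarrow> complex mat mat \<Rightarrow> complex mat \<Rightarrow> complex mat mat" where
  "opmat_times_mat q V R = mat (dim_row V) (dim_col R) (\<lambda>(i,j).
     mat q q (\<lambda>(k,l). \<Sum>m<dim_col V. V $$ (i,m) $$ (k,l) * R $$ (m,j)))"

definition mat_times_opmat :: "nat \<Rightarrow> complex mat \<Rightarrow> complex mat mat \<Rightarrow> complex mat mat" where
  "mat_times_opmat q R Q = mat (dim_row R) (dim_col Q) (\<lambda>(i,j).
     mat q q (\<lambda>(k,l). \<Sum>m<dim_col R. R $$ (i,m) * Q $$ (m,j) $$ (k,l)))"

definition flatten :: "nat \<Rightarrow> complex mat mat \<Rightarrow> complex mat" where
  "flatten q V = mat (q*q*dim_row V) (dim_col V)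
     (\<lambda>(r,j). V $$ (r div (q*q), j) $$ ((r mod (q*q)) div q, r mod q))"

definition column_rank :: "complex mat \<Rightarrow> nat" where
  "column_rank M = vec_space.rank (dim_row M) M"

definition orthonormal_cols :: "nat \<Rightarrow> complex mat mat \<Rightarrow> bool" where
  "orthonormal_cols q V \<longleftrightarrow> (\<forall>i<dim_col V. \<forall>j<dim_col V.
     (\<Sum>a<dim_row V. op_inner q (V $$ (a,i)) (V $$ (a,j))) = (if i = j then 1 else 0))"

definition pos_rr_block_QR :: "nat \<Rightarrow> complex mat mat \<Rightarrow> complex mat mat \<Rightarrow> complex mat \<Rightarrow> bool" where
  "pos_rr_block_QR q W Q R \<longleftrightarrow>
    (\<exists>\<chi> \<chi>' V' R'.
      regular_form q \<chi> W \<and>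
      \<comment> \<open>V' = [[1, c'],[0, A']] with orthonormal columns\<close>
      opmat_ok q (\<chi>+1) (\<chi>'+1) V' \<and>
      V' $$ (0,0) = 1\<^sub>m q \<and> (\<forall>i. 1 \<le> i \<and> i \<le> \<chi> \<longrightarrow> V' $$ (i,0) = 0\<^sub>m q q) \<and>
      orthonormal_cols q V' \<and>
      \<comment> \<open>R' = [[1, t],[0, R]] upper triangular\<close>
      R' \<in> carrier_mat (\<chi>'+1) (\<chi>+1) \<and>
      R' $$ (0,0) = 1 \<and> (\<forall>i<\<chi>'+1. \<forall>j<\<chi>+1. j < i \<longrightarrow> R' $$ (i,j) = 0) \<and>
      \<comment> \<open>V = V' R'\<close>
      V_block \<chi> W = opmat_times_mat q V' R' \<and>
      \<comment> \<open>Q = [[1, c', d],[0, A', b],[0,0,1]]\<close>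
      Q = mat (\<chi>+2) (\<chi>'+2) (\<lambda>(i,j).
            if j \<le> \<chi>' then (if i \<le> \<chi> then V' $$ (i,j) else 0\<^sub>m q q)
            else W $$ (i, \<chi>+1)) \<and>
      \<comment> \<open>R = [[1, t, 0],[0, R, 0],[0, 0, 1]]\<close>
      R = mat (\<chi>'+2) (\<chi>+2) (\<lambda>(i,j).
            if i \<le> \<chi>' \<and> j \<le> \<chi> then R' $$ (i,j)
            else if i = \<chi>'+1 \<and> j = \<chi>+1 then 1 else 0) \<and>
      \<comment> \<open>positive rank-revealing\<close>
      column_rank (flatten q (V_block \<chi> W)) = 1 + \<chi>' \<and>
      (\<chi>' = \<chi> \<longrightarrow> (\<forall>i\<le>\<chi>. R' $$ (i,i) \<in> \<real> \<and> 0 < Re (R' $$ (i,i)))))"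

end

theory Submission imports Defs begin

lemma rank_full_ker:
  fixes A :: "complex mat"
  assumes A: "A \<in> carrier_mat n nc"
    and ker: "\<And>v. v \<in> carrier_vec nc \<Longrightarrow> A *\<^sub>v v = 0\<^sub>v n \<Longrightarrow> v = 0\<^sub>v nc"
  shows "vec_space.rank n A = nc"
proof -
  have dist: "distinct (cols A)"
  proof (rule ccontr)
    assume "\<not> distinct (cols A)"
    then obtain i j where ij: "i < nc" "j < nc" "i \<noteq> j" "cols A ! i = cols A ! j"
      using A by (metis cols_length carrier_matD(2) distinct_conv_nth)
    hence cij: "col A i = col A j" using A by auto
    define v :: "complex vec" where "v = unit_vec nc i - unit_vec nc j"
    have vc: "v \<in> carrier_vec nc" unfolding v_def by auto
    have "A *\<^sub>v v = 0\<^sub>v n"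
    proof (rule eq_vecI)
      fix r assume "r < dim_vec (0\<^sub>v n :: complex vec)"
      hence r: "r < n" by simp
      have "(A *\<^sub>v v) $ r = row A r \<bullet> v" using A r by simp
      also have "\<dots> = row A r \<bullet> unit_vec nc i - row A r \<bullet> unit_vec nc j"
        unfolding v_def using A r by (intro scalar_prod_minus_distrib[of _ nc]) auto
      also have "\<dots> = A $$ (r,i) - A $$ (r,j)" using A r ij by simp
      also have "\<dots> = 0" using cij r A ij
        by (metis carrier_matD col_def diff_self index_vec)
      finally show "(A *\<^sub>v v) $ r = 0\<^sub>v n $ r" using r by simp
    qed (use A in auto)
    hence "v = 0\<^sub>v nc" using ker vc by blast
    hence "v $ i = 0" using ij by simp
    thus False unfolding v_def using ij by simp
  qed
  interpret vs: vec_space "TYPE(complex)" n .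
  have "vs.lin_indpt (set (cols A))"
  proof (rule ccontr)
    assume "\<not> vs.lin_indpt (set (cols A))"
    then obtain v where "v \<in> carrier_vec nc" "v \<noteq> 0\<^sub>v nc" "A *\<^sub>v v = 0\<^sub>v n"
      using vs.lin_depE[OF A _ dist] by blast
    thus False using ker by blast
  qed
  thus ?thesis using vs.lin_indpt_full_rank[OF A dist] by blast
qed

definition op_ker_triv :: "nat \<Rightarrow> nat \<Rightarrow> nat \<Rightarrow> complex mat mat \<Rightarrow> bool" where
  "op_ker_triv q m n V \<longleftrightarrow> (\<forall>c. (\<forall>a<m. \<forall>k<q. \<forall>l<q. (\<Sum>j<n. V $$ (a,j) $$ (k,l) * c j) = 0)
      \<longrightarrow> (\<forall>j<n. c j = 0))"

lemma flatten_rank: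
  assumes q: "0 < q" and V: "V \<in> carrier_mat m n" and K: "op_ker_triv q m n V"
  shows "column_rank (flatten q V) = n"
proof -
  have F: "flatten q V \<in> carrier_mat (q*q*m) n" using V unfolding flatten_def by auto
  have "vec_space.rank (q*q*m) (flatten q V) = n"
  proof (rule rank_full_ker[OF F])
    fix v :: "complex vec" assume v: "v \<in> carrier_vec n" and z: "flatten q V *\<^sub>v v = 0\<^sub>v (q*q*m)"
    have "\<forall>a<m. \<forall>k<q. \<forall>l<q. (\<Sum>j<n. V $$ (a,j) $$ (k,l) * v $ j) = 0"
    proof (intro allI impI)
      fix a k l assume a: "a < m" and k: "k < q" and l: "l < q"
      define r where "r = (k*q + l) + a*(q*q)"
      have kl: "k*q + l < q*q"
      proof -
        have "k*q + l < k*q + q" using l by simp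
        also have "\<dots> = (k+1)*q" by simp
        also have "\<dots> \<le> q*q" using k by (metis Suc_eq_plus1 Suc_leI mult_le_mono1)
        finally show ?thesis .
      qed
      have r1: "r div (q*q) = a" unfolding r_def using kl q
        by simp
      have r2: "r mod (q*q) = k*q+l" unfolding r_def using kl
        by simp
      have r3: "(k*q+l) div q = k" using l q by simp
      have r4: "r mod q = l"
      proof -
        have "r = (a*q + k)*q + l" unfolding r_def by (simp add: algebra_simps)
        thus ?thesis using l by simp
      qed
      have rlt: "r < q*q*m"
      proof -
        have "r < a*(q*q) + q*q" unfolding r_def using kl by simp
        also have "\<dots> = (a+1)*(q*q)" by simp
        also have "\<dots> \<le> m*(q*q)" using a by (metis Suc_eq_plus1 Suc_leI mult_le_mono1)
        finally show ?thesis by (simp add: mult.commute)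
      qed
      have "(flatten q V *\<^sub>v v) $ r = 0" using z rlt by simp
      moreover have "(flatten q V *\<^sub>v v) $ r = (\<Sum>j<n. V $$ (a,j) $$ (k,l) * v $ j)"
      proof -
        have "(flatten q V *\<^sub>v v) $ r = (\<Sum>j\<in>{0..<n}. flatten q V $$ (r,j) * v $ j)"
          using rlt F v by (simp add: scalar_prod_def)
        also have "\<dots> = (\<Sum>j<n. V $$ (a,j) $$ (k,l) * v $ j)"
        proof (rule sum.cong)
          show "{0..<n} = {..<n}" by auto
        next
          fix j assume "j \<in> {..<n}"
          hence "j < n" by simp
          thus "flatten q V $$ (r,j) * v $ j = V $$ (a,j) $$ (k,l) * v $ j"
            using rlt V r1 r2 r3 r4 unfolding flatten_def by simp
        qed
        finally show ?thesis .
      qed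
      ultimately show "(\<Sum>j<n. V $$ (a,j) $$ (k,l) * v $ j) = 0" by simp
    qed
    hence "\<forall>j<n. v $ j = 0" using K unfolding op_ker_triv_def by blast
    thus "v = 0\<^sub>v n" using v by (intro eq_vecI) auto
  qed
  thus ?thesis unfolding column_rank_def using F by simp
qed


lemma sum_swap_in: "(\<Sum>d\<in>D. (\<Sum>a\<in>A. f a d) * (c d :: complex)) = (\<Sum>a\<in>A. \<Sum>d\<in>D. f a d * c d)"
  by (simp add: sum_distrib_right) (rule sum.swap)

lemma sum_div_in: "(\<Sum>d\<in>D. (x d / (r::complex)) * c d) = (\<Sum>d\<in>D. x d * c d) / r"
  by (simp add: sum_divide_distrib)

lemma op_inner_lin:
  "(\<Sum>d\<in>D. op_inner q A (B d) * c d) =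
   (\<Sum>i<q. \<Sum>j<q. cnj (A $$ (i,j)) * (\<Sum>d\<in>D. B d $$ (i,j) * c d)) / of_nat q"
  unfolding op_inner_def sum_div_in
  by (simp add: sum_swap_in sum_distrib_left mult.assoc)

lemma base_ker:
  assumes q: "0 < q" and X: "X \<in> carrier_mat (\<chi>+1) (\<chi>+1)"
    and eig: "transfer q Ob (V_block \<chi> W) X = X" and inv: "invertible_mat X"
  shows "op_ker_triv q (\<chi>+1) (\<chi>+1) (V_block \<chi> W)"
  unfolding op_ker_triv_def
proof (rule allI, rule impI)
  fix c :: "nat \<Rightarrow> complex"
  assume H: "\<forall>a<\<chi>+1. \<forall>k<q. \<forall>l<q. (\<Sum>j<\<chi>+1. V_block \<chi> W $$ (a,j) $$ (k,l) * c j) = 0"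
  define V where "V = V_block \<chi> W"
  have dV: "dim_row V = \<chi>+1" "dim_col V = \<chi>+1" unfolding V_def V_block_def by auto
  have cV: "(\<Sum>d<\<chi>+1. coef_mat q Ob \<alpha> V $$ (b,d) * c d) = 0" if b: "b < \<chi>+1" for \<alpha> b
  proof -
    have "(\<Sum>d<\<chi>+1. coef_mat q Ob \<alpha> V $$ (b,d) * c d) = (\<Sum>d<\<chi>+1. op_inner q (Ob \<alpha>) (V $$ (b,d)) * c d)"
      using b dV by (intro sum.cong) (auto simp: coef_mat_def)
    also have "\<dots> = 0" unfolding op_inner_lin using H b unfolding V_def by simp
    finally show ?thesis .
  qed
  have Xc: "(\<Sum>d<\<chi>+1. X $$ (i,d) * c d) = 0" if i: "i < \<chi>+1" for i
  proof -
    have "(\<Sum>d<\<chi>+1. X $$ (i,d) * c d) = (\<Sum>d<\<chi>+1. transfer q Ob V X $$ (i,d) * c d)"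
      using eig unfolding V_def by simp
    also have "\<dots> = (\<Sum>d<\<chi>+1. (\<Sum>\<alpha><q*q. \<Sum>a<\<chi>+1. \<Sum>b<\<chi>+1.
        cnj (coef_mat q Ob \<alpha> V $$ (a,i)) * X $$ (a,b) * coef_mat q Ob \<alpha> V $$ (b,d)) * c d)"
      using i dV by (intro sum.cong) (auto simp: transfer_def)
    also have "\<dots> = (\<Sum>\<alpha><q*q. \<Sum>a<\<chi>+1. \<Sum>b<\<chi>+1.
        cnj (coef_mat q Ob \<alpha> V $$ (a,i)) * X $$ (a,b) * (\<Sum>d<\<chi>+1. coef_mat q Ob \<alpha> V $$ (b,d) * c d))"
      by (simp only: sum_swap_in sum_distrib_left mult.assoc)
    also have "\<dots> = 0" using cV by simp
    finally show ?thesis .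
  qed
  define v where "v = vec (\<chi>+1) c"
  have v: "v \<in> carrier_vec (\<chi>+1)" unfolding v_def by simp
  have Xv: "X *\<^sub>v v = 0\<^sub>v (\<chi>+1)"
  proof (rule eq_vecI)
    fix i assume "i < dim_vec (0\<^sub>v (\<chi>+1) :: complex vec)"
    hence i: "i < \<chi>+1" by simp
    have "(X *\<^sub>v v) $ i = (\<Sum>d\<in>{0..<\<chi>+1}. X $$ (i,d) * v $ d)" using X i v by (simp add: scalar_prod_def)
    also have "\<dots> = (\<Sum>d<\<chi>+1. X $$ (i,d) * c d)" unfolding v_def by (intro sum.cong) auto
    finally show "(X *\<^sub>v v) $ i = 0\<^sub>v (\<chi>+1) $ i" using Xc i by simp
  qed (use X in simp)
  obtain B where B1: "X * B = 1\<^sub>m (dim_row X)" and B2: "B * X = 1\<^sub>m (dim_row B)"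
    using inv unfolding invertible_mat_def inverts_mat_def by blast
  have "dim_col (B * X) = \<chi>+1" using X by simp
  hence rB: "dim_row B = \<chi>+1" using B2 by simp
  have "dim_col (X * B) = dim_col B" by simp
  hence cB: "dim_col B = \<chi>+1" using B1 X by simp
  have Bc: "B \<in> carrier_mat (\<chi>+1) (\<chi>+1)" using rB cB by auto
  have "v = (B * X) *\<^sub>v v" using B2 rB v by simp
  also have "\<dots> = B *\<^sub>v (X *\<^sub>v v)" using Bc X v by simp
  also have "\<dots> = 0\<^sub>v (\<chi>+1)" unfolding Xv using Bc by (intro eq_vecI) (auto simp: scalar_prod_def)
  finally have "v = 0\<^sub>v (\<chi>+1)" .
  thus "\<forall>j<\<chi>+1. c j = 0" unfolding v_def by (metis index_vec index_zero_vec(1))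
qed


lemma step_ker:
  assumes q: "0 < q" and QR: "pos_rr_block_QR q W Q R" and dW: "dim_row W = \<chi>+2"
    and K: "op_ker_triv q (\<chi>+1) (\<chi>+1) (V_block \<chi> W)"
    and W': "W' = mat_times_opmat q R Q"
  shows "dim_row W' = \<chi>+2 \<and> op_ker_triv q (\<chi>+1) (\<chi>+1) (V_block \<chi> W')"
proof -
  obtain \<chi>0 \<chi>' V' R' where reg: "regular_form q \<chi>0 W"
    and okV': "opmat_ok q (\<chi>0+1) (\<chi>'+1) V'"
    and orth: "orthonormal_cols q V'"
    and R'c: "R' \<in> carrier_mat (\<chi>'+1) (\<chi>0+1)"
    and VR: "V_block \<chi>0 W = opmat_times_mat q V' R'"
    and Qd: "Q = mat (\<chi>0+2) (\<chi>'+2) (\<lambda>(i,j).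
            if j \<le> \<chi>' then (if i \<le> \<chi>0 then V' $$ (i,j) else 0\<^sub>m q q)
            else W $$ (i, \<chi>0+1))"
    and Rd: "R = mat (\<chi>'+2) (\<chi>0+2) (\<lambda>(i,j).
            if i \<le> \<chi>' \<and> j \<le> \<chi>0 then R' $$ (i,j)
            else if i = \<chi>'+1 \<and> j = \<chi>0+1 then 1 else 0)"
    and rk: "column_rank (flatten q (V_block \<chi>0 W)) = 1 + \<chi>'"
    using QR unfolding pos_rr_block_QR_def by blast
  have "dim_row W = \<chi>0+2" using reg unfolding regular_form_def opmat_ok_def by auto
  hence e0: "\<chi>0 = \<chi>" using dW by simp
  have "column_rank (flatten q (V_block \<chi> W)) = \<chi>+1"
    by (rule flatten_rank[OF q _ K]) (auto simp: V_block_def)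
  hence e1: "\<chi>' = \<chi>" using rk e0 by simp
  note okV' = okV'[unfolded e0 e1] and R'c = R'c[unfolded e0 e1] and VR = VR[unfolded e0 e1]
    and Qd = Qd[unfolded e0 e1] and Rd = Rd[unfolded e0 e1]
  have dV': "dim_row V' = \<chi>+1" "dim_col V' = \<chi>+1" using okV' unfolding opmat_ok_def by auto
  have dR: "dim_row R = \<chi>+2" "dim_col R = \<chi>+2" using Rd by auto
  have dQ: "dim_col Q = \<chi>+2" using Qd by auto
  have dimW': "dim_row W' = \<chi>+2" using W' dR unfolding mat_times_opmat_def by simp
  have ent: "V_block \<chi> W' $$ (a,j) $$ (k,l) = (\<Sum>m<\<chi>+1. R' $$ (a,m) * V' $$ (m,j) $$ (k,l))"
    if a: "a < \<chi>+1" and j: "j < \<chi>+1" and k: "k < q" and l: "l < q" for a j k l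
  proof -
    have "V_block \<chi> W' $$ (a,j) $$ (k,l) = (\<Sum>m<\<chi>+2. R $$ (a,m) * Q $$ (m,j) $$ (k,l))"
      using a j k l dR dQ unfolding V_block_def W' mat_times_opmat_def by simp
    also have "\<dots> = (\<Sum>m<Suc (\<chi>+1). R $$ (a,m) * Q $$ (m,j) $$ (k,l))" by simp
    also have "\<dots> = (\<Sum>m<\<chi>+1. R $$ (a,m) * Q $$ (m,j) $$ (k,l)) + R $$ (a,\<chi>+1) * Q $$ (\<chi>+1,j) $$ (k,l)"
      by (rule sum.lessThan_Suc)
    also have "R $$ (a,\<chi>+1) = 0" using a unfolding Rd by simp
    also have "(\<Sum>m<\<chi>+1. R $$ (a,m) * Q $$ (m,j) $$ (k,l)) = (\<Sum>m<\<chi>+1. R' $$ (a,m) * V' $$ (m,j) $$ (k,l))"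
      using a j unfolding Rd Qd by (intro sum.cong) auto
    finally show ?thesis by simp
  qed
  have ker: "\<forall>j<\<chi>+1. c j = 0"
    if H: "\<forall>a<\<chi>+1. \<forall>k<q. \<forall>l<q. (\<Sum>j<\<chi>+1. V_block \<chi> W' $$ (a,j) $$ (k,l) * c j) = 0" for c
  proof -
    define d where "d m k l = (\<Sum>j<\<chi>+1. V' $$ (m,j) $$ (k,l) * c j)" for m k l
    have D: "(\<Sum>m<\<chi>+1. R' $$ (a,m) * d m k l) = 0" if a: "a < \<chi>+1" and k: "k < q" and l: "l < q" for a k l
    proof -
      have "0 = (\<Sum>j<\<chi>+1. V_block \<chi> W' $$ (a,j) $$ (k,l) * c j)" using H a k l by simp
      also have "\<dots> = (\<Sum>j<\<chi>+1. (\<Sum>m<\<chi>+1. R' $$ (a,m) * V' $$ (m,j) $$ (k,l)) * c j)"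
        using ent a k l by (intro sum.cong) auto
      also have "\<dots> = (\<Sum>m<\<chi>+1. R' $$ (a,m) * d m k l)"
        unfolding d_def by (simp only: sum_swap_in sum_distrib_left mult.assoc)
      finally show ?thesis by simp
    qed
    have d0: "d m k l = 0" if m: "m < \<chi>+1" and k: "k < q" and l: "l < q" for m k l
    proof -
      have "(\<Sum>b<\<chi>+1. V_block \<chi> W $$ (a,b) $$ (k',l') * d b k l) = 0"
        if a: "a < \<chi>+1" and k': "k' < q" and l': "l' < q" for a k' l'
      proof -
        have "(\<Sum>b<\<chi>+1. V_block \<chi> W $$ (a,b) $$ (k',l') * d b k l)
          = (\<Sum>b<\<chi>+1. (\<Sum>m<\<chi>+1. V' $$ (a,m) $$ (k',l') * R' $$ (m,b)) * d b k l)"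
          unfolding VR using a k' l' R'c dV' by (intro sum.cong) (auto simp: opmat_times_mat_def)
        also have "\<dots> = (\<Sum>m<\<chi>+1. V' $$ (a,m) $$ (k',l') * (\<Sum>b<\<chi>+1. R' $$ (m,b) * d b k l))"
          by (simp only: sum_swap_in sum_distrib_left mult.assoc)
        also have "\<dots> = 0" using D k l by simp
        finally show ?thesis .
      qed
      hence "\<forall>b<\<chi>+1. d b k l = 0" using K unfolding op_ker_triv_def
        by (rule_tac allE[OF K[unfolded op_ker_triv_def], of "\<lambda>b. d b k l"]) blast
      thus ?thesis using m by simp
    qed
    show ?thesis
    proof (rule allI, rule impI)
      fix i assume i: "i < \<chi>+1"
      have "(\<Sum>j<\<chi>+1. (if i = j then 1 else 0) * c j) = (\<Sum>j<\<chi>+1. if i = j then c j else 0)"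
        by (intro sum.cong) auto
      also have "\<dots> = c i" using i by (subst sum.delta') auto
      finally have "c i = (\<Sum>j<\<chi>+1. (if i = j then 1 else 0) * c j)" by simp
      also have "\<dots> = (\<Sum>j<\<chi>+1. (\<Sum>a<\<chi>+1. op_inner q (V' $$ (a,i)) (V' $$ (a,j))) * c j)"
        using orth i dV' unfolding orthonormal_cols_def by (intro sum.cong) auto
      also have "\<dots> = (\<Sum>a<\<chi>+1. \<Sum>j<\<chi>+1. op_inner q (V' $$ (a,i)) (V' $$ (a,j)) * c j)"
        by (simp only: sum_swap_in)
      also have "\<dots> = (\<Sum>a<\<chi>+1. (\<Sum>k<q. \<Sum>l<q. cnj (V' $$ (a,i) $$ (k,l)) * d a k l) / of_nat q)"
        unfolding op_inner_lin d_def by simp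
      also have "\<dots> = 0" using d0 by simp
      finally show "c i = 0" .
    qed
  qed
  show ?thesis using dimW' ker unfolding op_ker_triv_def by blast
qed

theorem lemma8:
  fixes q \<chi> :: nat and Ob :: "nat \<Rightarrow> complex mat"
    and W Q :: "nat \<Rightarrow> complex mat mat" and R :: "nat \<Rightarrow> complex mat"
    and X :: "complex mat"
  assumes q_pos: "0 < q"
    and onb: "op_onb q Ob"
    and regular: "regular_form q \<chi> (W 0)"
    and first_deg: "first_degree q Ob \<chi> (W 0)"
    and QR_iter: "\<And>n. n \<ge> 1 \<Longrightarrow>
        pos_rr_block_QR q (W (n-1)) (Q n) (R n) \<and> W n = mat_times_opmat q (R n) (Q n)"
    and X_dim: "X \<in> carrier_mat (\<chi>+1) (\<chi>+1)"
    and X_eig: "transfer q Ob (V_block \<chi> (W 0)) X = X"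
    and X_00: "X $$ (0,0) = 1"
    and X_inv: "invertible_mat X"
  shows "\<forall>n. bond_dim (W n) = \<chi>"
proof -
  have "dim_row (W n) = \<chi>+2 \<and> op_ker_triv q (\<chi>+1) (\<chi>+1) (V_block \<chi> (W n))" for n
  proof (induction n)
    case 0
    have "dim_row (W 0) = \<chi>+2" using regular unfolding regular_form_def opmat_ok_def by auto
    thus ?case using base_ker[OF q_pos X_dim X_eig X_inv] by simp
  next
    case (Suc n)
    have "pos_rr_block_QR q (W n) (Q (Suc n)) (R (Suc n))" and "W (Suc n) = mat_times_opmat q (R (Suc n)) (Q (Suc n))"
      using QR_iter[of "Suc n"] by auto
    thus ?case using step_ker[OF q_pos] Suc.IH by blast
  qed
  thus ?thesis unfolding bond_dim_def by simp
qed

end
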